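(* Let $\mathscr{H}$ be a complex Hilbert space, $N(\cdot)$ a norm on $\mathbb{B}(\mathscr{H})$, and $B,C\in\mathbb{B}(\mathscr{H})$. Then (a) $w_{(N,e)}(B,C)\geq\max\{w_N(B),w_N(C)\}$; (b) $w_{(N,e)}(B,C)\leq\sqrt{w_N^2(B)+w_N^2(C)}$.
   Context: For $T\in\mathbb{B}(\mathscr{H})$: $\Re(T)=\frac12(T+T^* )$ and $w_N(T)=\sup_{\theta\in\mathbb{R}}N(\Re(e^{i\theta}T))$. For $B,C\in\mathbb{B}(\mathscr{H})$, $w_{(N,e)}(B,C)=\sup_{\lambda_1,\lambda_2\in\mathbb{C},\ |\lambda_1|^2+|\lambda_2|^2\leq 1}\sup_{\theta\in\mathbb{R}} N(\Re(e^{i\theta}(\lambda_1B+\lambda_2C)))$. *)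

theory Defs
  imports "HOL-Analysis.Analysis"
begin

class complex_vector = real_vector +
  fixes scaleC :: "complex \<Rightarrow> 'a \<Rightarrow> 'a" (infixr "*\<^sub>C" 75)
  assumes scaleC_add_right: "a *\<^sub>C (x + y) = a *\<^sub>C x + a *\<^sub>C y"
    and scaleC_add_left: "(a + b) *\<^sub>C x = a *\<^sub>C x + b *\<^sub>C x"
    and scaleC_scaleC: "a *\<^sub>C (b *\<^sub>C x) = (a * b) *\<^sub>C x"
    and scaleC_one: "1 *\<^sub>C x = x"
    and scaleR_scaleC: "scaleR r x = complex_of_real r *\<^sub>C x"

class complex_inner = complex_vector + real_normed_vector +
  fixes cinner :: "'a \<Rightarrow> 'a \<Rightarrow> complex"
  assumes cinner_commute: "cinner x y = cnj (cinner y x)"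
    and cinner_add_left: "cinner (x + y) z = cinner x z + cinner y z"
    and cinner_scaleC_left: "cinner (r *\<^sub>C x) y = cnj r * cinner x y"
    and cinner_ge_zero: "0 \<le> Re (cinner x x)"
    and cinner_eq_zero_iff: "cinner x x = 0 \<longleftrightarrow> x = 0"
    and norm_eq_sqrt_cinner: "norm x = sqrt (Re (cinner x x))"

class chilbert_space = complex_inner + complete_space

definition clinear :: "('a::complex_vector \<Rightarrow> 'b::complex_vector) \<Rightarrow> bool" where
  "clinear f \<longleftrightarrow> (\<forall>x y. f (x + y) = f x + f y) \<and> (\<forall>c x. f (c *\<^sub>C x) = c *\<^sub>C f x)"

definition bounded_clinear :: "('a::complex_inner \<Rightarrow> 'b::complex_inner) \<Rightarrow> bool" where
  "bounded_clinear f \<longleftrightarrow> clinear f \<and> (\<exists>K. \<forall>x. norm (f x) \<le> norm x * K)"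

definition BH :: "('a::complex_inner \<Rightarrow> 'a) set" where
  "BH = {T. bounded_clinear T}"

definition cadjoint :: "('a::complex_inner \<Rightarrow> 'a) \<Rightarrow> ('a \<Rightarrow> 'a)" where
  "cadjoint T = (SOME S. \<forall>x y. cinner (T x) y = cinner x (S y))"

definition ReOp :: "('a::complex_inner \<Rightarrow> 'a) \<Rightarrow> ('a \<Rightarrow> 'a)" where
  "ReOp T = (\<lambda>x. (1/2) *\<^sub>C (T x + cadjoint T x))"

definition is_norm_on_BH :: "(('a::complex_inner \<Rightarrow> 'a) \<Rightarrow> real) \<Rightarrow> bool" where
  "is_norm_on_BH N \<longleftrightarrow>
     (\<forall>T\<in>BH. 0 \<le> N T) \<and>
     (\<forall>T\<in>BH. N T = 0 \<longleftrightarrow> T = (\<lambda>_. 0)) \<and>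
     (\<forall>c. \<forall>T\<in>BH. N (\<lambda>x. c *\<^sub>C T x) = cmod c * N T) \<and>
     (\<forall>S\<in>BH. \<forall>T\<in>BH. N (\<lambda>x. S x + T x) \<le> N S + N T)"

definition wN :: "(('a::complex_inner \<Rightarrow> 'a) \<Rightarrow> real) \<Rightarrow> ('a \<Rightarrow> 'a) \<Rightarrow> real" where
  "wN N T = (SUP \<theta>::real. N (ReOp (\<lambda>x. exp (\<i> * complex_of_real \<theta>) *\<^sub>C T x)))"

definition wNe :: "(('a::complex_inner \<Rightarrow> 'a) \<Rightarrow> real) \<Rightarrow> ('a \<Rightarrow> 'a) \<Rightarrow> ('a \<Rightarrow> 'a) \<Rightarrow> real" where
  "wNe N B C = (SUP l \<in> {(l1, l2). (cmod l1)\<^sup>2 + (cmod l2)\<^sup>2 \<le> 1}.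
     SUP \<theta>::real. N (ReOp (\<lambda>x. exp (\<i> * complex_of_real \<theta>) *\<^sub>C
                              (fst l *\<^sub>C B x + snd l *\<^sub>C C x))))"

end

theory Submission
  imports Defs
begin

lemma scaleC_zero_left[simp]: "(0::complex) *\<^sub>C (x::'a::complex_vector) = 0"
  using scaleR_scaleC[of 0 x] by simp

lemma scaleC_of_real: "complex_of_real r *\<^sub>C (x::'a::complex_vector) = r *\<^sub>R x"
  using scaleR_scaleC[of r x] by simp

lemma scaleC_zero_right[simp]: "a *\<^sub>C (0::'a::complex_vector) = 0"
  by (metis scaleC_scaleC scaleC_zero_left mult_zero_right)

lemma scaleC_minus1: "(-1) *\<^sub>C (x::'a::complex_vector) = - x"
  using scaleC_of_real[of "-1" x] by simp

lemma scaleC_minus_right: "a *\<^sub>C (- x::'a::complex_vector) = - (a *\<^sub>C x)"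
  by (metis scaleC_minus1 scaleC_scaleC mult.commute)

lemma scaleC_diff_right: "a *\<^sub>C (x - y::'a::complex_vector) = a *\<^sub>C x - a *\<^sub>C y"
  by (metis diff_conv_add_uminus scaleC_add_right scaleC_minus_right)

lemma scaleC_minus_left: "(- a) *\<^sub>C (x::'a::complex_vector) = - (a *\<^sub>C x)"
  by (metis scaleC_minus1 scaleC_scaleC mult_minus1)

lemma scaleC_diff_left: "(a - b) *\<^sub>C (x::'a::complex_vector) = a *\<^sub>C x - b *\<^sub>C x"
  by (metis diff_conv_add_uminus scaleC_add_left scaleC_minus_left)

lemma cinner_add_right: "cinner (x::'a::complex_inner) (y + z) = cinner x y + cinner x z"
  by (metis cinner_commute cinner_add_left complex_cnj_add)

lemma cinner_scaleC_right: "cinner (x::'a::complex_inner) (r *\<^sub>C y) = r * cinner x y"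
  by (metis cinner_commute cinner_scaleC_left complex_cnj_mult complex_cnj_cnj)

lemma cinner_zero_left[simp]: "cinner (0::'a::complex_inner) y = 0"
  by (metis cinner_scaleC_left scaleC_zero_left complex_cnj_zero mult_zero_left)

lemma cinner_zero_right[simp]: "cinner (x::'a::complex_inner) 0 = 0"
  by (metis cinner_commute cinner_zero_left complex_cnj_zero)

lemma cinner_minus_left: "cinner (- x::'a::complex_inner) y = - cinner x y"
  using cinner_scaleC_left[of "-1" x y] by (simp add: scaleC_minus1)

lemma cinner_minus_right: "cinner (x::'a::complex_inner) (- y) = - cinner x y"
  using cinner_scaleC_right[of x "-1" y] by (simp add: scaleC_minus1)

lemma cinner_diff_left: "cinner (x - z::'a::complex_inner) y = cinner x y - cinner z y"
  unfolding diff_conv_add_uminus cinner_add_left cinner_minus_left by (rule refl)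

lemma cinner_diff_right: "cinner (x::'a::complex_inner) (y - z) = cinner x y - cinner x z"
  unfolding diff_conv_add_uminus cinner_add_right cinner_minus_right by (rule refl)

lemma cinner_self: "cinner (x::'a::complex_inner) x = complex_of_real ((norm x)^2)"
proof -
  have im: "Im (cinner x x) = 0" using cinner_commute[of x x]
    by (metis cnj.simps(2) neg_equal_zero)
  have "Re (cinner x x) = (norm x)^2" using norm_eq_sqrt_cinner[of x] cinner_ge_zero[of x] by simp
  with im show ?thesis by (simp add: complex_eq_iff)
qed

lemma norm_scaleC: "norm (c *\<^sub>C (x::'a::complex_inner)) = cmod c * norm x"
proof -
  have "complex_of_real ((norm (c *\<^sub>C x))^2) = cnj c * c * complex_of_real ((norm x)^2)"
    using cinner_self[of "c *\<^sub>C x"] cinner_self[of x] by (simp add: cinner_scaleC_left cinner_scaleC_right ac_simps)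
  also have "cnj c * c = complex_of_real ((cmod c)^2)" by (metis complex_norm_square mult.commute of_real_power)
  finally have "complex_of_real ((norm (c *\<^sub>C x))^2) = complex_of_real ((cmod c * norm x)^2)"
    by (simp add: power_mult_distrib)
  hence "(norm (c *\<^sub>C x))^2 = (cmod c * norm x)^2" using of_real_eq_iff by blast
  thus ?thesis by (simp add: power2_eq_iff_nonneg)
qed

lemma cinner_self_eq_zero: "cinner x x = 0 \<Longrightarrow> (x::'a::complex_inner) = 0"
  using cinner_eq_zero_iff by blast

lemma cinner_ext: "(\<And>x. cinner x u = cinner x v) \<Longrightarrow> u = (v::'a::complex_inner)"
proof -
  assume h: "\<And>x. cinner x u = cinner x v"
  have "cinner (u - v) (u - v) = 0" using h[of "u-v"] by (simp add: cinner_diff_right)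
  hence "u - v = 0" using cinner_eq_zero_iff by blast
  thus ?thesis by simp
qed


lemma norm_add_sq: "(norm (x + y::'a::complex_inner))^2 = (norm x)^2 + (norm y)^2 + 2 * Re (cinner x y)"
proof -
  have "complex_of_real ((norm (x + y))^2) = cinner (x + y) (x + y)" by (rule cinner_self[symmetric])
  also have "\<dots> = cinner x x + cinner x y + cinner y x + cinner y y"
    by (simp add: cinner_add_left cinner_add_right)
  also have "cinner y x = cnj (cinner x y)" by (rule cinner_commute)
  finally have "complex_of_real ((norm (x + y))^2) = complex_of_real ((norm x)^2) + cinner x y + cnj (cinner x y) + complex_of_real ((norm y)^2)"
    by (simp add: cinner_self)
  hence "Re (complex_of_real ((norm (x + y))^2)) = Re (complex_of_real ((norm x)^2) + cinner x y + cnj (cinner x y) + complex_of_real ((norm y)^2))"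
    by simp
  thus ?thesis by simp
qed

lemma norm_diff_sq: "(norm (x - y::'a::complex_inner))^2 = (norm x)^2 + (norm y)^2 - 2 * Re (cinner x y)"
  using norm_add_sq[of x "-y"] by (simp add: cinner_minus_right)

lemma cauchy_schwarz: "cmod (cinner x y) \<le> norm (x::'a::complex_inner) * norm y"
proof (cases "y = 0")
  case True thus ?thesis by simp
next
  case False
  define n where "n = (norm y)^2"
  define c where "c = cinner y x"
  have npos: "n > 0" using False by (simp add: n_def)
  define v where "v = complex_of_real n *\<^sub>C x - c *\<^sub>C y"
  have cxy: "cinner x y = cnj c" by (simp add: c_def cinner_commute[of x y])
  have cyy: "cinner y y = complex_of_real n" by (simp add: n_def cinner_self)
  have cxx: "cinner x x = complex_of_real ((norm x)^2)" by (simp add: cinner_self)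
  have cc: "cnj c * c = complex_of_real ((cmod c)^2)" by (metis complex_norm_square mult.commute of_real_power)
  have "cinner v v = complex_of_real n * complex_of_real n * cinner x x - complex_of_real n * c * cinner x y
       - cnj c * complex_of_real n * cinner y x + cnj c * c * cinner y y"
    unfolding v_def by (simp add: cinner_diff_left cinner_diff_right cinner_scaleC_left cinner_scaleC_right algebra_simps)
  also have "\<dots> = complex_of_real (n * (n * (norm x)^2 - (cmod c)^2))"
    unfolding cxy cyy cxx cc c_def[symmetric] by (simp add: algebra_simps cc[simplified mult.commute])
  finally have "complex_of_real ((norm v)^2) = complex_of_real (n * (n * (norm x)^2 - (cmod c)^2))"
    by (simp add: cinner_self)
  hence "(norm v)^2 = n * (n * (norm x)^2 - (cmod c)^2)" using of_real_eq_iff by blast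
  hence "0 \<le> n * (n * (norm x)^2 - (cmod c)^2)" by (metis zero_le_power2)
  hence "(cmod c)^2 \<le> n * (norm x)^2" using npos by (simp add: zero_le_mult_iff)
  hence "(cmod c)^2 \<le> (norm x * norm y)^2" by (simp add: n_def power_mult_distrib mult.commute)
  hence "cmod c \<le> norm x * norm y" by (rule power2_le_imp_le) simp
  moreover have "cmod (cinner x y) = cmod c" by (simp add: cxy)
  ultimately show ?thesis by simp
qed


lemma min_norm_exists:
  fixes f :: "'a::chilbert_space \<Rightarrow> complex"
  assumes fadd: "\<And>x y. f (x + y) = f x + f y"
    and fsc: "\<And>c x. f (c *\<^sub>C x) = c * f x"
    and fb: "\<And>x. cmod (f x) \<le> norm x * K"
    and z0: "f z0 = 1"
  shows "\<exists>z. f z = 1 \<and> (\<forall>w. f w = 1 \<longrightarrow> (norm z)^2 \<le> (norm w)^2)"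
proof -
  have bl: "bounded_linear f"
  proof (rule bounded_linear_intro[where K=K])
    show "f (x + y) = f x + f y" for x y by (rule fadd)
    show "f (r *\<^sub>R x) = r *\<^sub>R f x" for r x
      using fsc[of "complex_of_real r" x] by (simp add: scaleC_of_real scaleR_conv_of_real)
    show "norm (f x) \<le> norm x * K" for x using fb by simp
  qed
  define A where "A = {x. f x = 1}"
  define S where "S = (\<lambda>x. (norm x)^2) ` A"
  define d2 where "d2 = Inf S"
  have Sne: "S \<noteq> {}" using z0 by (auto simp: S_def A_def)
  have Sbdd: "bdd_below S" unfolding S_def by (rule bdd_belowI[of _ 0]) auto
  have low: "d2 \<le> (norm w)^2" if "f w = 1" for w
    unfolding d2_def S_def by (rule cInf_lower) (use that Sbdd in \<open>auto simp: S_def A_def\<close>)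
  have "\<forall>n. \<exists>x. f x = 1 \<and> (norm x)^2 < d2 + inverse (real (Suc n))"
  proof
    fix n
    have "d2 < d2 + inverse (real (Suc n))" by simp
    then obtain s where "s \<in> S" "s < d2 + inverse (real (Suc n))"
      using cInf_less_iff[OF Sne Sbdd] unfolding d2_def by blast
    thus "\<exists>x. f x = 1 \<and> (norm x)^2 < d2 + inverse (real (Suc n))" by (auto simp: S_def A_def)
  qed
  then obtain X where X1: "\<And>n. f (X n) = 1" and X2: "\<And>n. (norm (X n))^2 < d2 + inverse (real (Suc n))"
    by metis
  have mid: "4 * d2 \<le> (norm (X m + X n))^2" for m n
  proof -
    have "f ((1/2) *\<^sub>C (X m + X n)) = 1" by (simp add: fsc fadd X1)
    hence "d2 \<le> (norm ((1/2) *\<^sub>C (X m + X n)))^2" by (rule low)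
    also have "\<dots> = (norm (X m + X n))^2 / 4" by (simp add: norm_scaleC power_divide)
    finally show ?thesis by simp
  qed
  have par: "(norm (X m - X n))^2 \<le> 2 * inverse (real (Suc m)) + 2 * inverse (real (Suc n))" for m n
  proof -
    have "(norm (X m - X n))^2 = 2 * (norm (X m))^2 + 2 * (norm (X n))^2 - (norm (X m + X n))^2"
      using norm_add_sq[of "X m" "X n"] norm_diff_sq[of "X m" "X n"] by simp
    thus ?thesis using mid[of m n] X2[of m] X2[of n] by simp
  qed
  have "Cauchy X"
  proof (rule CauchyI)
    fix e :: real assume e: "0 < e"
    obtain M :: nat where M: "4 / e^2 < real M" using reals_Archimedean2 by blast
    have Mpos: "0 < real M" using M e by (smt (verit) divide_pos_pos zero_less_power)
    have "\<forall>m\<ge>M. \<forall>n\<ge>M. norm (X m - X n) < e"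
    proof (intro allI impI)
      fix m n assume mM: "M \<le> m" and nM: "M \<le> n"
      have im: "inverse (real (Suc m)) \<le> inverse (real M)" using mM Mpos
        by (simp add: le_imp_inverse_le)
      have in': "inverse (real (Suc n)) \<le> inverse (real M)" using nM Mpos
        by (simp add: le_imp_inverse_le)
      have "4 * inverse (real M) < e^2"
      proof -
        have "4 < e^2 * real M" using M e by (simp add: divide_less_eq mult.commute)
        thus ?thesis using Mpos by (simp add: field_simps)
      qed
      hence "(norm (X m - X n))^2 < e^2" using par[of m n] im in' by linarith
      thus "norm (X m - X n) < e" using e by (simp add: power_less_imp_less_base)
    qed
    thus "\<exists>M. \<forall>m\<ge>M. \<forall>n\<ge>M. norm (X m - X n) < e" by blast
  qed
  then obtain L where L: "X \<longlonglongrightarrow> L" using Cauchy_convergent_iff convergent_def by blast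
  have "(\<lambda>n. f (X n)) \<longlonglongrightarrow> f L" by (rule bounded_linear.tendsto[OF bl L])
  hence fL: "f L = 1" using X1 by (simp add: LIMSEQ_const_iff)
  have t1: "(\<lambda>n. (norm (X n))^2) \<longlonglongrightarrow> (norm L)^2" by (intro tendsto_intros L)
  have t2: "(\<lambda>n. d2 + inverse (real (Suc n))) \<longlonglongrightarrow> d2" by (rule LIMSEQ_inverse_real_of_nat_add)
  have "(norm L)^2 \<le> d2"
    by (rule LIMSEQ_le[OF t1 t2]) (use X2 less_imp_le in blast)
  thus ?thesis using fL low by (meson order_trans)
qed


lemma riesz:
  fixes f :: "'a::chilbert_space \<Rightarrow> complex"
  assumes fadd: "\<And>x y. f (x + y) = f x + f y"
    and fsc: "\<And>c x. f (c *\<^sub>C x) = c * f x"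
    and fb: "\<And>x. cmod (f x) \<le> norm x * K"
  shows "\<exists>w. \<forall>x. f x = cinner w x"
proof (cases "\<forall>x. f x = 0")
  case True thus ?thesis by (intro exI[of _ 0]) simp
next
  case False
  then obtain x0 where x0: "f x0 \<noteq> 0" by blast
  have "f (inverse (f x0) *\<^sub>C x0) = 1" using x0 by (simp add: fsc)
  then obtain z where fz: "f z = 1" and zmin: "\<And>w. f w = 1 \<Longrightarrow> (norm z)^2 \<le> (norm w)^2"
    using min_norm_exists[OF fadd fsc fb] by blast
  have f0: "f 0 = 0" using fsc[of 0 0] by simp
  have orth: "cinner z k = 0" if fk: "f k = 0" for k
  proof -
    define c where "c = cinner z k"
    define s where "s = 1 / ((norm k)^2 + 1)"
    have kp: "0 < (norm k)^2 + 1" by (simp add: add_nonneg_pos)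
    have spos: "s > 0" using kp by (simp add: s_def)
    have sk: "s * (norm k)^2 < 1" using kp by (simp add: s_def field_simps)
    have cc: "cnj c * c = (complex_of_real (cmod c))^2"
      by (metis complex_norm_square mult.commute of_real_power)
    define t where "t = - complex_of_real s * cnj c"
    have "f (z + t *\<^sub>C k) = 1" by (simp add: fadd fsc fz fk)
    hence "(norm z)^2 \<le> (norm (z + t *\<^sub>C k))^2" by (rule zmin)
    also have "\<dots> = (norm z)^2 + (cmod t * norm k)^2 + 2 * Re (t * c)"
      by (simp add: norm_add_sq norm_scaleC cinner_scaleC_right c_def)
    also have "t * c = - complex_of_real (s * (cmod c)^2)"
      using cc by (simp add: t_def mult.assoc)
    also have "cmod t = s * cmod c" using spos by (simp add: t_def norm_mult)
    finally have "0 \<le> (s * cmod c * norm k)^2 - 2 * (s * (cmod c)^2)" by simp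
    hence "0 \<le> s * ((cmod c)^2 * (s * (norm k)^2 - 2))" by (simp add: power2_eq_square algebra_simps)
    hence "0 \<le> (cmod c)^2 * (s * (norm k)^2 - 2)" using spos by (simp add: zero_le_mult_iff)
    moreover have "s * (norm k)^2 - 2 < 0" using sk by simp
    ultimately have "(cmod c)^2 \<le> 0" using zero_le_mult_iff[of "(cmod c)^2" "s * (norm k)^2 - 2"] by linarith
    hence "cmod c = 0" by simp
    thus ?thesis by (simp add: c_def)
  qed
  have z0: "z \<noteq> 0" using fz f0 by auto
  have nz: "(norm z)^2 > 0" using z0 by simp
  define w where "w = complex_of_real (inverse ((norm z)^2)) *\<^sub>C z"
  show ?thesis
  proof (intro exI allI)
    fix x
    have "f (x - f x *\<^sub>C z) = 0"
      using fadd[of "x - f x *\<^sub>C z" "f x *\<^sub>C z"] by (simp add: fsc fz)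
    hence "cinner z (x - f x *\<^sub>C z) = 0" by (rule orth)
    hence "cinner z x = f x * complex_of_real ((norm z)^2)"
      by (simp add: cinner_diff_right cinner_scaleC_right cinner_self)
    thus "f x = cinner w x" using nz
      by (simp add: w_def cinner_scaleC_left field_simps)
  qed
qed


lemma BH_add:
  fixes T :: "'a::complex_inner \<Rightarrow> 'a"
  shows "T \<in> BH \<Longrightarrow> T (x + y) = T x + T y"
  by (simp add: BH_def bounded_clinear_def clinear_def)

lemma BH_scale:
  fixes T :: "'a::complex_inner \<Rightarrow> 'a"
  shows "T \<in> BH \<Longrightarrow> T (c *\<^sub>C x) = c *\<^sub>C T x"
  by (simp add: BH_def bounded_clinear_def clinear_def)

lemma BH_bound:
  fixes T :: "'a::complex_inner \<Rightarrow> 'a"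
  shows "T \<in> BH \<Longrightarrow> \<exists>K\<ge>0. \<forall>x. norm (T x) \<le> norm x * K"
proof -
  assume "T \<in> BH"
  then obtain K where K: "\<forall>x. norm (T x) \<le> norm x * K"
    by (auto simp: BH_def bounded_clinear_def)
  have "\<forall>x. norm (T x) \<le> norm x * \<bar>K\<bar>"
  proof
    fix x :: 'a
    have "norm x * K \<le> norm x * \<bar>K\<bar>" by (simp add: mult_left_mono)
    thus "norm (T x) \<le> norm x * \<bar>K\<bar>" using K by (meson order_trans)
  qed
  thus ?thesis by (intro exI[of _ "\<bar>K\<bar>"]) simp
qed

lemma BH_intro:
  fixes T :: "'a::complex_inner \<Rightarrow> 'a"
  assumes "\<And>x y. T (x + y) = T x + T y" "\<And>c x. T (c *\<^sub>C x) = c *\<^sub>C T x"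
    "\<And>x. norm (T x) \<le> norm x * K"
  shows "T \<in> BH"
  using assms by (auto simp: BH_def bounded_clinear_def clinear_def)

lemma BH_sum:
  fixes S T :: "'a::complex_inner \<Rightarrow> 'a"
  shows "S \<in> BH \<Longrightarrow> T \<in> BH \<Longrightarrow> (\<lambda>x. S x + T x) \<in> BH"
proof -
  assume S: "S \<in> BH" and T: "T \<in> BH"
  obtain K1 where K1: "\<forall>x. norm (S x) \<le> norm x * K1" using BH_bound[OF S] by blast
  obtain K2 where K2: "\<forall>x. norm (T x) \<le> norm x * K2" using BH_bound[OF T] by blast
  show ?thesis
  proof (rule BH_intro[where K="K1 + K2"])
    show "S (x + y) + T (x + y) = S x + T x + (S y + T y)" for x y
      by (simp add: BH_add[OF S] BH_add[OF T] algebra_simps)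
    show "S (c *\<^sub>C x) + T (c *\<^sub>C x) = c *\<^sub>C (S x + T x)" for c x
      by (simp add: BH_scale[OF S] BH_scale[OF T] scaleC_add_right)
    show "norm (S x + T x) \<le> norm x * (K1 + K2)" for x
      using norm_triangle_ineq[of "S x" "T x"] K1 K2 by (smt (verit) distrib_left)
  qed
qed

lemma BH_smult:
  fixes T :: "'a::complex_inner \<Rightarrow> 'a"
  shows "T \<in> BH \<Longrightarrow> (\<lambda>x. c *\<^sub>C T x) \<in> BH"
proof -
  assume T: "T \<in> BH"
  obtain K where K: "K \<ge> 0" "\<forall>x. norm (T x) \<le> norm x * K" using BH_bound[OF T] by blast
  show ?thesis
  proof (rule BH_intro[where K="cmod c * K"])
    show "c *\<^sub>C T (x + y) = c *\<^sub>C T x + c *\<^sub>C T y" for x y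
      by (simp add: BH_add[OF T] scaleC_add_right)
    show "c *\<^sub>C T (d *\<^sub>C x) = d *\<^sub>C (c *\<^sub>C T x)" for d x
      by (simp add: BH_scale[OF T] scaleC_scaleC mult.commute)
    show "norm (c *\<^sub>C T x) \<le> norm x * (cmod c * K)" for x
      using mult_left_mono[OF K(2)[rule_format, of x] norm_ge_zero[of c]] by (simp add: norm_scaleC ac_simps)
  qed
qed

lemma adj_prop:
  fixes T :: "'a::chilbert_space \<Rightarrow> 'a"
  shows "T \<in> BH \<Longrightarrow> cinner (T x) y = cinner x (cadjoint T y)"
proof -
  assume T: "T \<in> BH"
  obtain K where K: "K \<ge> 0" "\<forall>x. norm (T x) \<le> norm x * K" using BH_bound[OF T] by blast
  have "\<forall>y. \<exists>w. \<forall>x. cinner y (T x) = cinner w x"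
  proof
    fix y
    show "\<exists>w. \<forall>x. cinner y (T x) = cinner w x"
    proof (rule riesz[where K="norm y * K"])
      show "cinner y (T (x + z)) = cinner y (T x) + cinner y (T z)" for x z
        by (simp add: BH_add[OF T] cinner_add_right)
      show "cinner y (T (c *\<^sub>C x)) = c * cinner y (T x)" for c x
        by (simp add: BH_scale[OF T] cinner_scaleC_right)
      show "cmod (cinner y (T x)) \<le> norm x * (norm y * K)" for x
      proof -
        have "cmod (cinner y (T x)) \<le> norm y * norm (T x)" by (rule cauchy_schwarz)
        also have "\<dots> \<le> norm y * (norm x * K)" using K(2) by (simp add: mult_left_mono)
        finally show ?thesis by (simp add: ac_simps)
      qed
    qed
  qed
  then obtain S where S: "\<And>y x. cinner y (T x) = cinner (S y) x" by metis
  have "\<forall>x y. cinner (T x) y = cinner x (S y)"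
    by (metis S cinner_commute)
  hence "\<exists>S. \<forall>x y. cinner (T x) y = cinner x (S y)" by blast
  hence "\<forall>x y. cinner (T x) y = cinner x (cadjoint T y)"
    unfolding cadjoint_def by (rule someI_ex)
  thus ?thesis by blast
qed

lemma adj_smult:
  fixes T :: "'a::chilbert_space \<Rightarrow> 'a"
  shows "T \<in> BH \<Longrightarrow> cadjoint (\<lambda>x. c *\<^sub>C T x) y = cnj c *\<^sub>C cadjoint T y"
proof -
  assume T: "T \<in> BH"
  show ?thesis
  proof (rule cinner_ext)
    fix x
    have "cinner x (cadjoint (\<lambda>x. c *\<^sub>C T x) y) = cinner (c *\<^sub>C T x) y"
      using adj_prop[OF BH_smult[OF T]] by simp
    also have "\<dots> = cinner x (cnj c *\<^sub>C cadjoint T y)"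
      by (simp add: cinner_scaleC_left cinner_scaleC_right adj_prop[OF T])
    finally show "cinner x (cadjoint (\<lambda>x. c *\<^sub>C T x) y) = cinner x (cnj c *\<^sub>C cadjoint T y)" .
  qed
qed

lemma adj_sum:
  fixes S T :: "'a::chilbert_space \<Rightarrow> 'a"
  shows "S \<in> BH \<Longrightarrow> T \<in> BH \<Longrightarrow> cadjoint (\<lambda>x. S x + T x) y = cadjoint S y + cadjoint T y"
proof -
  assume S: "S \<in> BH" and T: "T \<in> BH"
  show ?thesis
  proof (rule cinner_ext)
    fix x
    have "cinner x (cadjoint (\<lambda>x. S x + T x) y) = cinner (S x + T x) y"
      using adj_prop[OF BH_sum[OF S T]] by simp
    also have "\<dots> = cinner x (cadjoint S y + cadjoint T y)"
      by (simp add: cinner_add_left cinner_add_right adj_prop[OF S] adj_prop[OF T])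
    finally show "cinner x (cadjoint (\<lambda>x. S x + T x) y) = cinner x (cadjoint S y + cadjoint T y)" .
  qed
qed

lemma adj_BH:
  fixes T :: "'a::chilbert_space \<Rightarrow> 'a"
  shows "T \<in> BH \<Longrightarrow> cadjoint T \<in> BH"
proof -
  assume T: "T \<in> BH"
  obtain K where K: "K \<ge> 0" "\<forall>x. norm (T x) \<le> norm x * K" using BH_bound[OF T] by blast
  show ?thesis
  proof (rule BH_intro[where K=K])
    show "cadjoint T (x + y) = cadjoint T x + cadjoint T y" for x y
      by (rule cinner_ext) (simp add: adj_prop[OF T, symmetric] cinner_add_right)
    show "cadjoint T (c *\<^sub>C x) = c *\<^sub>C cadjoint T x" for c x
      by (rule cinner_ext) (simp add: adj_prop[OF T, symmetric] cinner_scaleC_right)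
    show "norm (cadjoint T y) \<le> norm y * K" for y
    proof -
      let ?u = "cadjoint T y"
      have "complex_of_real ((norm ?u)^2) = cinner ?u ?u" by (rule cinner_self[symmetric])
      also have "\<dots> = cinner (T ?u) y" by (simp add: adj_prop[OF T])
      finally have "complex_of_real ((norm ?u)^2) = cinner (T ?u) y" .
      hence "(norm ?u)^2 = cmod (cinner (T ?u) y)"
        by (metis norm_of_real abs_of_nonneg zero_le_power2)
      also have "\<dots> \<le> norm (T ?u) * norm y" by (rule cauchy_schwarz)
      also have "\<dots> \<le> norm ?u * K * norm y" using K(2) by (simp add: mult_right_mono)
      finally have h: "norm ?u * norm ?u \<le> norm ?u * (norm y * K)" by (simp add: power2_eq_square ac_simps)
      show ?thesis
      proof (cases "norm ?u = 0")
        case True thus ?thesis using K(1) by simp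
      next
        case False
        hence "norm ?u > 0" by simp
        thus ?thesis using h by simp
      qed
    qed
  qed
qed


lemma ReOp_BH:
  fixes T :: "'a::chilbert_space \<Rightarrow> 'a"
  shows "T \<in> BH \<Longrightarrow> ReOp T \<in> BH"
  unfolding ReOp_def by (intro BH_smult BH_sum adj_BH)

lemma ReOp_sum:
  fixes S T :: "'a::chilbert_space \<Rightarrow> 'a"
  assumes S: "S \<in> BH" and T: "T \<in> BH"
  shows "ReOp (\<lambda>x. S x + T x) = (\<lambda>x. ReOp S x + ReOp T x)"
  unfolding ReOp_def by (rule ext) (simp add: adj_sum[OF S T] scaleC_add_right[symmetric] ac_simps)

lemma ReOp_real:
  fixes T :: "'a::chilbert_space \<Rightarrow> 'a"
  assumes T: "T \<in> BH"
  shows "ReOp (\<lambda>x. complex_of_real r *\<^sub>C T x) = (\<lambda>x. complex_of_real r *\<^sub>C ReOp T x)"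
  unfolding ReOp_def by (rule ext) (simp add: adj_smult[OF T] scaleC_add_right scaleC_scaleC mult.commute)

lemma exp_decomp: "exp (\<i> * complex_of_real t) = complex_of_real (cos t) + complex_of_real (sin t) * \<i>"
  by (simp add: cis_conv_exp[symmetric] complex_eq_iff)

lemma polar_decomp: "c = complex_of_real (cmod c) * exp (\<i> * complex_of_real (Arg c))"
  by (metis cis_conv_exp rcis_cmod_Arg rcis_def)

context
  fixes N :: "('a::chilbert_space \<Rightarrow> 'a) \<Rightarrow> real"
  assumes hN: "is_norm_on_BH N"
begin

lemma N_nonneg: "T \<in> BH \<Longrightarrow> 0 \<le> N T"
  using hN by (simp add: is_norm_on_BH_def)

lemma N_scale: "T \<in> BH \<Longrightarrow> N (\<lambda>x. c *\<^sub>C T x) = cmod c * N T"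
  using hN by (simp add: is_norm_on_BH_def)

lemma N_tri: "S \<in> BH \<Longrightarrow> T \<in> BH \<Longrightarrow> N (\<lambda>x. S x + T x) \<le> N S + N T"
  using hN by (simp add: is_norm_on_BH_def)

lemma wN_bdd:
  assumes T: "T \<in> BH"
  shows "bdd_above (range (\<lambda>t::real. N (ReOp (\<lambda>x. exp (\<i> * complex_of_real t) *\<^sub>C T x))))"
proof (rule bdd_aboveI2)
  fix t :: real
  define P where "P = (\<lambda>x. complex_of_real (cos t) *\<^sub>C T x)"
  define Q where "Q = (\<lambda>x. complex_of_real (sin t) *\<^sub>C (\<i> *\<^sub>C T x))"
  have iT: "(\<lambda>x. \<i> *\<^sub>C T x) \<in> BH" by (rule BH_smult[OF T])
  have P: "P \<in> BH" unfolding P_def by (rule BH_smult[OF T])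
  have Q: "Q \<in> BH" unfolding Q_def by (rule BH_smult[OF iT])
  have eq: "(\<lambda>x. exp (\<i> * complex_of_real t) *\<^sub>C T x) = (\<lambda>x. P x + Q x)"
    by (rule ext) (simp add: P_def Q_def exp_decomp scaleC_add_left scaleC_scaleC)
  have RP: "ReOp P = (\<lambda>x. complex_of_real (cos t) *\<^sub>C ReOp T x)"
    unfolding P_def by (rule ReOp_real[OF T])
  have RQ: "ReOp Q = (\<lambda>x. complex_of_real (sin t) *\<^sub>C ReOp (\<lambda>x. \<i> *\<^sub>C T x) x)"
    unfolding Q_def by (rule ReOp_real[OF iT])
  have "N (ReOp (\<lambda>x. exp (\<i> * complex_of_real t) *\<^sub>C T x)) = N (\<lambda>x. ReOp P x + ReOp Q x)"
    by (simp add: eq ReOp_sum[OF P Q])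
  also have "\<dots> \<le> N (ReOp P) + N (ReOp Q)" by (rule N_tri[OF ReOp_BH[OF P] ReOp_BH[OF Q]])
  also have "N (ReOp P) = \<bar>cos t\<bar> * N (ReOp T)"
    unfolding RP by (simp add: N_scale[OF ReOp_BH[OF T]])
  also have "N (ReOp Q) = \<bar>sin t\<bar> * N (ReOp (\<lambda>x. \<i> *\<^sub>C T x))"
    unfolding RQ by (simp add: N_scale[OF ReOp_BH[OF iT]])
  also have "\<bar>cos t\<bar> * N (ReOp T) + \<bar>sin t\<bar> * N (ReOp (\<lambda>x. \<i> *\<^sub>C T x))
      \<le> 1 * N (ReOp T) + 1 * N (ReOp (\<lambda>x. \<i> *\<^sub>C T x))"
    by (intro add_mono mult_right_mono N_nonneg ReOp_BH T iT abs_cos_le_one abs_sin_le_one)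
  finally show "N (ReOp (\<lambda>x. exp (\<i> * complex_of_real t) *\<^sub>C T x))
      \<le> N (ReOp T) + N (ReOp (\<lambda>x. \<i> *\<^sub>C T x))" by simp
qed

lemma N_ReOp_le:
  assumes T: "T \<in> BH"
  shows "N (ReOp (\<lambda>x. c *\<^sub>C T x)) \<le> cmod c * wN N T"
proof -
  define U where "U = (\<lambda>x. exp (\<i> * complex_of_real (Arg c)) *\<^sub>C T x)"
  have U: "U \<in> BH" unfolding U_def by (rule BH_smult[OF T])
  have eq: "(\<lambda>x. c *\<^sub>C T x) = (\<lambda>x. complex_of_real (cmod c) *\<^sub>C U x)"
    by (rule ext) (simp add: U_def scaleC_scaleC polar_decomp[symmetric])
  have "N (ReOp (\<lambda>x. c *\<^sub>C T x)) = cmod c * N (ReOp U)"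
    unfolding eq ReOp_real[OF U] by (simp add: N_scale[OF ReOp_BH[OF U]])
  also have "N (ReOp U) \<le> wN N T"
    unfolding wN_def U_def by (rule cSUP_upper[OF UNIV_I wN_bdd[OF T]])
  hence "cmod c * N (ReOp U) \<le> cmod c * wN N T" by (simp add: mult_left_mono)
  finally show ?thesis .
qed

end

lemma cs_aux:
  fixes a b p q :: real
  assumes "a^2 + b^2 \<le> 1"
  shows "a * p + b * q \<le> sqrt (p^2 + q^2)"
proof (rule real_le_rsqrt)
  have "(a * p + b * q)^2 + (a * q - b * p)^2 = (a^2 + b^2) * (p^2 + q^2)"
    by (simp add: power2_eq_square algebra_simps)
  hence "(a * p + b * q)^2 \<le> (a^2 + b^2) * (p^2 + q^2)" by (metis le_add_same_cancel1 zero_le_power2)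
  also have "\<dots> \<le> 1 * (p^2 + q^2)" by (rule mult_right_mono[OF assms]) simp
  finally show "(a * p + b * q)^2 \<le> p^2 + q^2" by simp
qed


theorem theorem2p4:
  fixes N :: "('a::chilbert_space \<Rightarrow> 'a) \<Rightarrow> real"
    and B C :: "'a \<Rightarrow> 'a"
  assumes "is_norm_on_BH N"
    and "B \<in> BH" and "C \<in> BH"
  shows "wNe N B C \<ge> max (wN N B) (wN N C) \<and>
         wNe N B C \<le> sqrt ((wN N B)\<^sup>2 + (wN N C)\<^sup>2)"
proof -
  note hN = assms(1) and hB = assms(2) and hC = assms(3)
  define Ls where "Ls = {(l1::complex, l2::complex). (cmod l1)\<^sup>2 + (cmod l2)\<^sup>2 \<le> 1}"
  define g where "g = (\<lambda>l::complex \<times> complex. SUP \<theta>::real. N (ReOp (\<lambda>x. exp (\<i> * complex_of_real \<theta>) *\<^sub>C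
                              (fst l *\<^sub>C B x + snd l *\<^sub>C C x))))"
  have wNe_eq: "wNe N B C = (SUP l \<in> Ls. g l)" by (simp add: wNe_def Ls_def g_def)
  define bnd where "bnd = sqrt ((wN N B)\<^sup>2 + (wN N C)\<^sup>2)"
  have inner: "N (ReOp (\<lambda>x. exp (\<i> * complex_of_real t) *\<^sub>C (fst l *\<^sub>C B x + snd l *\<^sub>C C x))) \<le> bnd"
    if l: "l \<in> Ls" for l t
  proof -
    define e where "e = exp (\<i> * complex_of_real t)"
    define P where "P = (\<lambda>x. (e * fst l) *\<^sub>C B x)"
    define Q where "Q = (\<lambda>x. (e * snd l) *\<^sub>C C x)"
    have P: "P \<in> BH" unfolding P_def by (rule BH_smult[OF hB])
    have Q: "Q \<in> BH" unfolding Q_def by (rule BH_smult[OF hC])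
    have eq: "(\<lambda>x. e *\<^sub>C (fst l *\<^sub>C B x + snd l *\<^sub>C C x)) = (\<lambda>x. P x + Q x)"
      by (rule ext) (simp add: P_def Q_def scaleC_add_right scaleC_scaleC)
    have "N (ReOp (\<lambda>x. e *\<^sub>C (fst l *\<^sub>C B x + snd l *\<^sub>C C x))) \<le> N (ReOp P) + N (ReOp Q)"
      unfolding eq ReOp_sum[OF P Q] by (rule N_tri[OF hN ReOp_BH[OF P] ReOp_BH[OF Q]])
    also have "\<dots> \<le> cmod (fst l) * wN N B + cmod (snd l) * wN N C"
    proof (rule add_mono)
      show "N (ReOp P) \<le> cmod (fst l) * wN N B"
        using N_ReOp_le[OF hN hB, of "e * fst l"] by (simp add: P_def e_def norm_mult)
      show "N (ReOp Q) \<le> cmod (snd l) * wN N C"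
        using N_ReOp_le[OF hN hC, of "e * snd l"] by (simp add: Q_def e_def norm_mult)
    qed
    also have "\<dots> \<le> bnd" unfolding bnd_def
      by (rule cs_aux) (use l in \<open>auto simp: Ls_def\<close>)
    finally show ?thesis by (simp add: e_def)
  qed
  have gle: "g l \<le> bnd" if "l \<in> Ls" for l
    unfolding g_def by (rule cSUP_least) (use inner[OF that] in auto)
  have "(0, 0) \<in> Ls" by (simp add: Ls_def)
  hence Lne: "Ls \<noteq> {}" by blast
  have gbdd: "bdd_above (g ` Ls)" by (rule bdd_aboveI2[where M=bnd]) (rule gle)
  have up: "wNe N B C \<le> bnd" unfolding wNe_eq by (rule cSUP_least[OF Lne gle])
  have g10: "g (1, 0) = wN N B" by (simp add: g_def wN_def scaleC_one)
  have g01: "g (0, 1) = wN N C" by (simp add: g_def wN_def scaleC_one)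
  have "g (1, 0) \<le> wNe N B C" unfolding wNe_eq by (rule cSUP_upper[OF _ gbdd]) (simp add: Ls_def)
  moreover have "g (0, 1) \<le> wNe N B C" unfolding wNe_eq by (rule cSUP_upper[OF _ gbdd]) (simp add: Ls_def)
  ultimately have "max (wN N B) (wN N C) \<le> wNe N B C" using g10 g01 by simp
  with up show ?thesis by (simp add: bnd_def)
qed

end
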